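(* Let $n\ge1$, $\mathcal{K}=\{\texttt{a},\texttt{b}\}$, $\epsilon\ge0$ and $p=e^\epsilon/(1+e^\epsilon)$. For the uniform prior $\pi$ on $\mathcal{K}^n$ and the single-target gain function $g_{\rm T}$, $$V_{\rm T}[\pi\triangleright\mathbf{N}\mathbf{S}]=\frac{1}{2^n}\sum_{i=0}^{n}\binom{n}{i}\frac{\max(i,n-i)\,p+\min(i,n-i)(1-p)}{n}.$$
   Context: A dataset is $x=(x_0,\dots,x_{n-1})\in\mathcal{K}^n$; its histogram $h(x)$ is the map $\kappa\mapsto|\{i:x_i=\kappa\}|$; $\#z$ is the number of datasets with histogram $z$. Full $k$-RR channel (with $k=2$) $\mathbf{N}:\mathcal{K}^n\to\mathcal{K}^n$: $\mathbf{N}_{x,y}=\prod_{i}q(y_i\mid x_i)$, $q(b\mid a)=p$ if $b=a$, $1-p$ otherwise. Shuffle channel $\mathbf{S}:\mathcal{K}^n\to\mathcal{K}^n$: $\mathbf{S}_{x,y}=1/\#h(x)$ if $h(y)=h(x)$, else $0$. $\mathbf{N}\mathbf{S}$ is the matrix product. Uniform prior $\pi_x=1/2^n$. Single-target gain function: $\mathcal{W}=\mathcal{K}$, $g_{\rm T}(w,x)=1$ if $x_0=w$, else $0$. Posterior vulnerability: $V_{\rm T}[\pi\triangleright\mathbf{C}]=\sum_{y}\max_{w}\sum_{x}\pi_x\mathbf{C}_{x,y}g_{\rm T}(w,x)$. *)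

theory Defs
  imports Complex_Main
begin

text \<open>Alphabet K = {a,b} is modelled by bool (a = True, b = False).
  Datasets of size n are boolean lists of length n.\<close>

definition datasets :: "nat \<Rightarrow> bool list set" where
  "datasets n = {x. length x = n}"

definition hist :: "bool list \<Rightarrow> bool \<Rightarrow> nat" where
  "hist x = (\<lambda>k. count_list x k)"

definition numhist :: "nat \<Rightarrow> (bool \<Rightarrow> nat) \<Rightarrow> nat" where
  "numhist n z = card {x \<in> datasets n. hist x = z}"

definition krr_q :: "real \<Rightarrow> bool \<Rightarrow> bool \<Rightarrow> real" where
  "krr_q p b a = (if b = a then p else 1 - p)"

definition chanN :: "real \<Rightarrow> bool list \<Rightarrow> bool list \<Rightarrow> real" where
  "chanN p x y = (\<Prod>i<length x. krr_q p (y ! i) (x ! i))"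

definition chanS :: "nat \<Rightarrow> bool list \<Rightarrow> bool list \<Rightarrow> real" where
  "chanS n x y = (if hist y = hist x then 1 / real (numhist n (hist x)) else 0)"

definition chan_mult :: "nat \<Rightarrow> (bool list \<Rightarrow> bool list \<Rightarrow> real)
    \<Rightarrow> (bool list \<Rightarrow> bool list \<Rightarrow> real) \<Rightarrow> bool list \<Rightarrow> bool list \<Rightarrow> real" where
  "chan_mult n A B x y = (\<Sum>z\<in>datasets n. A x z * B z y)"

definition uniform_prior :: "nat \<Rightarrow> bool list \<Rightarrow> real" where
  "uniform_prior n x = 1 / 2 ^ n"

definition gT :: "bool \<Rightarrow> bool list \<Rightarrow> real" where
  "gT w x = (if x ! 0 = w then 1 else 0)"

definition post_vuln :: "nat \<Rightarrow> (bool \<Rightarrow> bool list \<Rightarrow> real) \<Rightarrow> (bool list \<Rightarrow> real)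
    \<Rightarrow> (bool list \<Rightarrow> bool list \<Rightarrow> real) \<Rightarrow> real" where
  "post_vuln n g \<pi> C = (\<Sum>y\<in>datasets n. Max ((\<lambda>w. \<Sum>x\<in>datasets n. \<pi> x * C x y * g w x) ` UNIV))"

end

theory Submission
  imports Defs
begin

lemma datasets_0: "datasets 0 = {[]}"
  by (auto simp: datasets_def)

lemma datasets_Suc: "datasets (Suc n) = (\<lambda>(b,x). b # x) ` (UNIV \<times> datasets n)"
  by (auto simp: datasets_def image_iff length_Suc_conv)

lemma finite_datasets: "finite (datasets n)"
  by (induction n) (auto simp: datasets_0 datasets_Suc)

lemma inj_cons_pair: "inj_on (\<lambda>(b,x). b # x) A"
  by (auto simp: inj_on_def)

lemma chanN_Cons: "chanN p (b # x) (c # z) = krr_q p c b * chanN p x z"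
  unfolding chanN_def length_Cons prod.lessThan_Suc_shift by simp

lemma sum_chanN: "length z = n \<Longrightarrow> (\<Sum>x\<in>datasets n. chanN p x z) = 1"
proof (induction n arbitrary: z)
  case 0
  then show ?case by (simp add: datasets_0 chanN_def)
next
  case (Suc n)
  then obtain c z' where z: "z = c # z'" "length z' = n" by (auto simp: length_Suc_conv)
  have "(\<Sum>x\<in>datasets (Suc n). chanN p x z) = (\<Sum>(b,x)\<in>UNIV \<times> datasets n. chanN p (b # x) z)"
    unfolding datasets_Suc by (subst sum.reindex[OF inj_cons_pair]) (simp add: case_prod_unfold)
  also have "\<dots> = (\<Sum>b\<in>UNIV. \<Sum>x\<in>datasets n. krr_q p c b * chanN p x z')"
    by (simp add: sum.cartesian_product z chanN_Cons)
  also have "\<dots> = (\<Sum>b\<in>UNIV. krr_q p c b)"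
    by (simp add: sum_distrib_left[symmetric] Suc.IH z)
  also have "\<dots> = 1" by (simp add: UNIV_bool krr_q_def)
  finally show ?case .
qed

lemma sum_chanN_gT: "length z = Suc m \<Longrightarrow>
   (\<Sum>x\<in>datasets (Suc m). chanN p x z * gT w x) = krr_q p (z ! 0) w"
proof -
  assume "length z = Suc m"
  then obtain c z' where z: "z = c # z'" "length z' = m" by (auto simp: length_Suc_conv)
  have "(\<Sum>x\<in>datasets (Suc m). chanN p x z * gT w x)
     = (\<Sum>(b,x)\<in>UNIV \<times> datasets m. chanN p (b # x) z * gT w (b # x))"
    unfolding datasets_Suc by (subst sum.reindex[OF inj_cons_pair]) (simp add: case_prod_unfold)
  also have "\<dots> = (\<Sum>b\<in>UNIV. \<Sum>x\<in>datasets m. (krr_q p c b * gT w [b]) * chanN p x z')"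
    by (simp add: sum.cartesian_product z chanN_Cons gT_def mult_ac)
  also have "\<dots> = (\<Sum>b\<in>UNIV. krr_q p c b * gT w [b])"
    by (simp add: sum_distrib_left[symmetric] sum_chanN z)
  also have "\<dots> = krr_q p (z ! 0) w" by (simp add: UNIV_bool gT_def z)
  finally show ?thesis .
qed

definition A :: "nat \<Rightarrow> nat \<Rightarrow> bool list set" where
  "A n k = {z. length z = n \<and> count_list z True = k}"

lemma A_0: "A 0 k = (if k = 0 then {[]} else {})"
  by (auto simp: A_def)

lemma A_Suc: "A (Suc m) k = (if k > 0 then Cons True ` A m (k - 1) else {}) \<union> Cons False ` A m k"
  by (auto simp: A_def length_Suc_conv image_iff split: if_splits)

lemma finite_A: "finite (A n k)"
  by (rule finite_subset[OF _ finite_datasets[of n]]) (auto simp: A_def datasets_def)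

lemma card_A: "card (A n k) = n choose k"
proof (induction n arbitrary: k)
  case 0
  then show ?case by (simp add: A_0)
next
  case (Suc m)
  show ?case
  proof (cases k)
    case 0
    then show ?thesis by (simp add: A_Suc card_image Suc.IH)
  next
    case (Suc j)
    have "card (A (Suc m) k) = card (Cons True ` A m j) + card (Cons False ` A m k)"
      unfolding A_Suc using Suc by (subst card_Un_disjoint) (auto simp: finite_A)
    also have "\<dots> = (m choose j) + (m choose k)" by (simp add: card_image Suc.IH)
    finally show ?thesis using Suc by simp
  qed
qed

lemma sum_A: "(\<Sum>z\<in>A (Suc m) k. f (z ! 0)) =
   (if k > 0 then f True * real (m choose (k - 1)) else 0) + f False * real (m choose k)"
proof -
  have "(\<Sum>z\<in>A (Suc m) k. f (z ! 0)) =
     (\<Sum>z\<in>(if k > 0 then Cons True ` A m (k - 1) else {}). f (z ! 0)) + (\<Sum>z\<in>Cons False ` A m k. f (z ! 0))"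
    unfolding A_Suc by (subst sum.union_disjoint) (auto simp: finite_A)
  also have "\<dots> = (if k > 0 then f True * real (m choose (k - 1)) else 0) + f False * real (m choose k)"
    by (simp add: sum.reindex card_A)
  finally show ?thesis .
qed

lemma count_TF: "count_list xs True + count_list xs False = length xs"
  by (induction xs) auto

lemma hist_eq: "length z = length y \<Longrightarrow> (hist z = hist y) = (count_list z True = count_list y True)"
proof
  assume "length z = length y" "count_list z True = count_list y True"
  then have "count_list z False = count_list y False" using count_TF[of z] count_TF[of y] by simp
  then show "hist z = hist y" using \<open>count_list z True = count_list y True\<close>
    unfolding hist_def by (intro ext) (metis (full_types))
qed (simp add: hist_def)

lemma arith_key:
  fixes a b N K p :: real
  assumes N: "N > 0" and ab: "a + b > 0" and a0: "a \<ge> 0" and b0: "b \<ge> 0"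
    and ea: "N * a = K * (a + b)" and eb: "N * b = (N - K) * (a + b)" and p: "1/2 \<le> p"
  shows "max (p*a+(1-p)*b) ((1-p)*a+p*b) / (a+b) = (max K (N-K) * p + min K (N-K) * (1-p)) / N"
proof (cases "K \<ge> N - K")
  case True
  have "N * (a - b) = (2*K - N) * (a + b)" using ea eb by (simp add: algebra_simps)
  moreover have "(2*K - N) * (a + b) \<ge> 0" using True ab by simp
  ultimately have h: "N * (a - b) \<ge> 0" by simp
  have "a - b \<ge> 0" using h N by (simp add: zero_le_mult_iff)
  then have "a \<ge> b" by simp
  then have "(2*p - 1) * (a - b) \<ge> 0" using p by simp
  then have m: "max (p*a+(1-p)*b) ((1-p)*a+p*b) = p*a+(1-p)*b" by (simp add: algebra_simps)
  have "(p*a+(1-p)*b)*N = p*(N*a) + (1-p)*(N*b)" by (simp add: algebra_simps)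
  also have "\<dots> = (K*p + (N-K)*(1-p))*(a+b)" unfolding ea eb by (simp add: algebra_simps)
  finally have "(p*a+(1-p)*b)/(a+b) = (K*p + (N-K)*(1-p))/N" using N ab by (simp add: field_simps)
  then show ?thesis using True m by simp
next
  case False
  have "N * (b - a) = (N - 2*K) * (a + b)" using ea eb by (simp add: algebra_simps)
  moreover have "(N - 2*K) * (a + b) \<ge> 0" using False ab by simp
  ultimately have h: "N * (b - a) \<ge> 0" by simp
  have "b - a \<ge> 0" using h N by (simp add: zero_le_mult_iff)
  then have "b \<ge> a" by simp
  then have "(2*p - 1) * (b - a) \<ge> 0" using p by simp
  then have m: "max (p*a+(1-p)*b) ((1-p)*a+p*b) = (1-p)*a+p*b" by (simp add: algebra_simps)
  have "((1-p)*a+p*b)*N = (1-p)*(N*a) + p*(N*b)" by (simp add: algebra_simps)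
  also have "\<dots> = ((N-K)*p + K*(1-p))*(a+b)" unfolding ea eb by (simp add: algebra_simps)
  finally have "((1-p)*a+p*b)/(a+b) = ((N-K)*p + K*(1-p))/N" using N ab by (simp add: field_simps)
  then show ?thesis using False m by simp
qed

lemma binom_facts:
  assumes "k \<le> Suc m"
  defines "a \<equiv> (if k > 0 then m choose (k - 1) else 0)" and "b \<equiv> m choose k"
  shows "Suc m choose k = a + b" "Suc m * a = k * (a + b)" "Suc m * b = (Suc m - k) * (a + b)"
proof -
  show 1: "Suc m choose k = a + b" unfolding a_def b_def by (cases k) auto
  have 2: "Suc m * a = k * (Suc m choose k)"
  proof (cases k)
    case (Suc j)
    then show ?thesis unfolding a_def using Suc_times_binomial[of j m] by simp
  qed (simp add: a_def)
  then show 2: "Suc m * a = k * (a + b)" unfolding 1 .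
  obtain r where r: "Suc m = k + r" using assms le_Suc_ex by blast
  have "r * a = k * b" using 2 unfolding r by (simp add: algebra_simps)
  then show "Suc m * b = (Suc m - k) * (a + b)" unfolding r by (simp add: algebra_simps)
qed

lemma max_div: "(c::real) > 0 \<Longrightarrow> max (a/c) (b/c) = max a b / c"
  unfolding max_def by (auto simp: divide_le_cancel)

lemma V_eq:
  assumes y: "y \<in> datasets (Suc m)"
  shows "(\<Sum>x\<in>datasets (Suc m). uniform_prior (Suc m) x * chan_mult (Suc m) (chanN p) (chanS (Suc m)) x y * gT w x)
    = 1 / 2 ^ Suc m * (1 / real (Suc m choose count_list y True)) *
      (\<Sum>z\<in>A (Suc m) (count_list y True). krr_q p (z ! 0) w)"
proof -
  let ?D = "datasets (Suc m)"
  let ?k = "count_list y True"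
  have "(\<Sum>x\<in>?D. uniform_prior (Suc m) x * chan_mult (Suc m) (chanN p) (chanS (Suc m)) x y * gT w x)
      = (\<Sum>x\<in>?D. \<Sum>z\<in>?D. 1 / 2 ^ Suc m * chanS (Suc m) z y * (chanN p x z * gT w x))"
    unfolding chan_mult_def uniform_prior_def
    by (simp add: sum_distrib_left sum_distrib_right mult_ac)
  also have "\<dots> = (\<Sum>z\<in>?D. 1 / 2 ^ Suc m * chanS (Suc m) z y * (\<Sum>x\<in>?D. chanN p x z * gT w x))"
    by (subst sum.swap) (simp add: sum_distrib_left)
  also have "\<dots> = (\<Sum>z\<in>?D. 1 / 2 ^ Suc m * chanS (Suc m) z y * krr_q p (z ! 0) w)"
  proof (intro sum.cong refl)
    fix z assume "z \<in> ?D"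
    then have "length z = Suc m" by (simp add: datasets_def)
    then show "1 / 2 ^ Suc m * chanS (Suc m) z y * (\<Sum>x\<in>?D. chanN p x z * gT w x)
      = 1 / 2 ^ Suc m * chanS (Suc m) z y * krr_q p (z ! 0) w" by (simp add: sum_chanN_gT)
  qed
  also have "\<dots> = (\<Sum>z\<in>?D. if count_list z True = ?k then
        1 / 2 ^ Suc m * (1 / real (Suc m choose ?k)) * krr_q p (z ! 0) w else 0)"
  proof (intro sum.cong refl)
    fix z assume z: "z \<in> ?D"
    have he: "hist y = hist z \<longleftrightarrow> count_list z True = ?k"
      using z y hist_eq[of z y] by (auto simp: datasets_def)
    have "{x \<in> ?D. hist x = hist y} = A (Suc m) ?k"
      using y hist_eq by (auto simp: datasets_def A_def)
    then have "numhist (Suc m) (hist y) = Suc m choose ?k"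
      unfolding numhist_def by (simp add: card_A)
    then show "1 / 2 ^ Suc m * chanS (Suc m) z y * krr_q p (z ! 0) w = (if count_list z True = ?k then
        1 / 2 ^ Suc m * (1 / real (Suc m choose ?k)) * krr_q p (z ! 0) w else 0)"
      unfolding chanS_def using he by auto
  qed
  also have "\<dots> = (\<Sum>z\<in>{z\<in>?D. count_list z True = ?k}.
        1 / 2 ^ Suc m * (1 / real (Suc m choose ?k)) * krr_q p (z ! 0) w)"
    by (simp only: sum.inter_filter[OF finite_datasets])
  also have "{z\<in>?D. count_list z True = ?k} = A (Suc m) ?k"
    by (auto simp: datasets_def A_def)
  finally show ?thesis by (simp add: sum_distrib_left)
qed

theorem mainTheorem11:
  fixes n :: nat and \<epsilon> p :: real
  assumes "n \<ge> 1" and "\<epsilon> \<ge> 0" and "p = exp \<epsilon> / (1 + exp \<epsilon>)"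
  shows "post_vuln n gT (uniform_prior n) (chan_mult n (chanN p) (chanS n))
       = 1 / 2 ^ n * (\<Sum>i=0..n. real (n choose i) *
            ((real (max i (n - i)) * p + real (min i (n - i)) * (1 - p)) / real n))"
proof -
  obtain m where n: "n = Suc m" using assms(1) by (cases n) auto
  have "exp \<epsilon> \<ge> 1" using assms(2) by simp
  moreover have e0: "0 < 1 + exp \<epsilon>" using exp_gt_zero[of \<epsilon>] by linarith
  ultimately have "1/2 \<le> exp \<epsilon> / (1 + exp \<epsilon>)" by (simp add: le_divide_eq)
  then have p: "1/2 \<le> p" using assms(3) by simp
  define G where "G k = 1 / 2 ^ Suc m * (1 / real (Suc m choose k)) *
      max (\<Sum>z\<in>A (Suc m) k. krr_q p (z ! 0) True) (\<Sum>z\<in>A (Suc m) k. krr_q p (z ! 0) False)" for k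
  have "post_vuln n gT (uniform_prior n) (chan_mult n (chanN p) (chanS n))
      = (\<Sum>y\<in>datasets (Suc m). G (count_list y True))"
    unfolding post_vuln_def n
  proof (intro sum.cong refl)
    fix y assume y: "y \<in> datasets (Suc m)"
    have u: "(UNIV :: bool set) = {True, False}" by auto
    show "Max ((\<lambda>w. \<Sum>x\<in>datasets (Suc m). uniform_prior (Suc m) x * chan_mult (Suc m) (chanN p) (chanS (Suc m)) x y * gT w x) ` UNIV)
      = G (count_list y True)"
    proof -
      have "count_list y True \<le> Suc m" using y count_le_length[of y True] by (simp add: datasets_def)
      then have "real (Suc m choose count_list y True) > 0" by simp
      then have "(2 * 2 ^ m * real (Suc m choose count_list y True)) > 0" by simp
      then show ?thesis unfolding u G_def using V_eq[OF y] by (simp add: max_div)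
    qed
  qed
  also have "\<dots> = (\<Sum>k\<in>{0..Suc m}. \<Sum>y\<in>{y\<in>datasets (Suc m). count_list y True = k}. G (count_list y True))"
  proof (rule sum.group[where S="datasets (Suc m)" and T="{0..Suc m}" and g="\<lambda>y. count_list y True"
         and h="\<lambda>y. G (count_list y True)", symmetric])
    show "finite (datasets (Suc m))" by (rule finite_datasets)
    show "finite {0..Suc m}" by simp
    show "(\<lambda>y. count_list y True) ` datasets (Suc m) \<subseteq> {0..Suc m}"
    proof
      fix k assume "k \<in> (\<lambda>y. count_list y True) ` datasets (Suc m)"
      then obtain y where "y \<in> datasets (Suc m)" "k = count_list y True" by blast
      then show "k \<in> {0..Suc m}" using count_le_length[of y True] by (simp add: datasets_def)
    qed
  qed
  also have "\<dots> = (\<Sum>k\<in>{0..Suc m}. \<Sum>y\<in>{y\<in>datasets (Suc m). count_list y True = k}. G k)"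
    by (intro sum.cong refl) auto
  also have "\<dots> = (\<Sum>k\<in>{0..Suc m}. real (Suc m choose k) * G k)"
  proof (intro sum.cong refl)
    fix k
    have "{y\<in>datasets (Suc m). count_list y True = k} = A (Suc m) k" by (auto simp: datasets_def A_def)
    then show "(\<Sum>y\<in>{y\<in>datasets (Suc m). count_list y True = k}. G k) = real (Suc m choose k) * G k"
      by (simp add: card_A)
  qed
  also have "\<dots> = 1 / 2 ^ n * (\<Sum>i=0..n. real (n choose i) *
            ((real (max i (n - i)) * p + real (min i (n - i)) * (1 - p)) / real n))"
    unfolding sum_distrib_left n
  proof (intro sum.cong refl)
    fix k assume k: "k \<in> {0..Suc m}"
    then have kle: "k \<le> Suc m" by simp
    define a where "a = (if k > 0 then m choose (k - 1) else 0)"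
    define b where "b = m choose k"
    note bf = binom_facts[OF kle, folded a_def b_def]
    have pos: "Suc m choose k > 0" using kle by simp
    have sT: "(\<Sum>z\<in>A (Suc m) k. krr_q p (z ! 0) True) = p * real a + (1-p) * real b"
      unfolding sum_A[where f="\<lambda>c. krr_q p c True" and m=m and k=k] a_def b_def by (simp add: krr_q_def)
    have sF: "(\<Sum>z\<in>A (Suc m) k. krr_q p (z ! 0) False) = (1-p) * real a + p * real b"
      unfolding sum_A[where f="\<lambda>c. krr_q p c False" and m=m and k=k] a_def b_def by (simp add: krr_q_def)
    have "a + b > 0" using pos bf(1) by simp
    then have ab: "real a + real b > 0" by (metis of_nat_0_less_iff of_nat_add)
    have ea: "real (Suc m) * real a = real k * (real a + real b)"
      using arg_cong[OF bf(2), of real] by (simp add: algebra_simps)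
    have eb: "real (Suc m) * real b = (real (Suc m) - real k) * (real a + real b)"
      using ea by (simp add: algebra_simps)
    note key = arith_key[OF _ ab _ _ ea eb p]
    show "real (Suc m choose k) * G k = 1 / 2 ^ Suc m * (real (Suc m choose k) *
            ((real (max k (Suc m - k)) * p + real (min k (Suc m - k)) * (1 - p)) / real (Suc m)))"
    proof -
      have k1: "max (p * real a + (1 - p) * real b) ((1 - p) * real a + p * real b) / (real a + real b)
        = (real (max k (Suc m - k)) * p + real (min k (Suc m - k)) * (1 - p)) / real (Suc m)"
      proof -
        have d: "real (Suc m - k) = 1 + real m - real k" using kle by (simp add: of_nat_diff)
        have mx: "real (max k (Suc m - k)) = max (real k) (1 + real m - real k)"
          by (simp only: of_nat_max d)
        have mn: "real (min k (Suc m - k)) = min (real k) (1 + real m - real k)"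
          by (simp only: of_nat_min d)
        show ?thesis unfolding mx mn using key kle by (simp add: of_nat_diff)
      qed
      have C: "real (Suc m choose k) = real a + real b" using bf(1) by simp
      show ?thesis unfolding G_def sT sF k1[symmetric] C using ab by simp
    qed
  qed
  finally show ?thesis .
qed
end
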